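(* The category $\mathbf{AlgLPries}$ of algebraic L-spaces and coherent L-morphisms is a full subcategory of the category $\mathbf{ConLPries}$ of continuous L-spaces and proper L-morphisms.
   Context: A Priestley space is a Stone space $X$ with a partial order such that clopen upsets separate points. An L-space is a Priestley space in which the downset of each clopen set is clopen and the closure of each open upset is open. ${\sf ClopUp}(X)$ is the set of clopen upsets; $\mathrm{cl}$ denotes closure. An L-morphism is a continuous order-preserving map $f:X\to X'$ between L-spaces with $f^{-1}(\mathrm{cl}\,U)=\mathrm{cl}\,f^{-1}(U)$ for every open upset $U$ of $X'$. The spatial part of $X$ is $Y=\{y\in X\mid{\downarrow}y\text{ clopen}\}$. A Scott upset is a closed upset $F$ with $\min F\subseteq Y$; ${\sf ClopSUp}(X)$ is the set of clopen Scott upsets. For $U,V\in{\sf ClopUp}(X)$, $V\ll U$ means that for every open upset $W$, $U\subseteq\mathrm{cl}\,W$ implies $V\subseteq W$; $\ker U=\bigcup\{V\in{\sf ClopUp}(X)\mid V\ll U\}$; $\mathrm{core}\,U=\bigcup\{V\in{\sf ClopSUp}(X)\mid V\subseteq U\}$. $X$ is a continuous L-space if $\ker U$ is dense in $U$ for each $U\in{\sf ClopUp}(X)$, and an algebraic L-space if $\mathrm{core}\,U$ is dense in $U$ for each $U\in{\sf ClopUp}(X)$. An L-morphism $f:X_1\to X_2$ is proper if $f^{-1}(\ker U)\subseteq\ker f^{-1}(U)$, and coherent if $f^{-1}(\mathrm{core}\,U)\subseteq\mathrm{core}\,f^{-1}(U)$, for all $U\in{\sf ClopUp}(X_2)$.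 *)

theory Defs
  imports "HOL-Analysis.Analysis"
begin

text \<open>An ordered topological space is given by a topology T on the carrier
  topspace T together with a relation le, considered on the carrier.\<close>

definition clopenin :: "'a topology \<Rightarrow> 'a set \<Rightarrow> bool" where
  "clopenin T C \<longleftrightarrow> openin T C \<and> closedin T C"

definition stone_space :: "'a topology \<Rightarrow> bool" where
  "stone_space T \<longleftrightarrow> compact_space T \<and> Hausdorff_space T \<and>
     (\<forall>U x. openin T U \<and> x \<in> U \<longrightarrow> (\<exists>C. clopenin T C \<and> x \<in> C \<and> C \<subseteq> U))"

definition partial_order_on_carrier :: "'a topology \<Rightarrow> ('a \<Rightarrow> 'a \<Rightarrow> bool) \<Rightarrow> bool" where
  "partial_order_on_carrier T le \<longleftrightarrow>
     (\<forall>x\<in>topspace T. le x x) \<and>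
     (\<forall>x\<in>topspace T. \<forall>y\<in>topspace T. le x y \<and> le y x \<longrightarrow> x = y) \<and>
     (\<forall>x\<in>topspace T. \<forall>y\<in>topspace T. \<forall>z\<in>topspace T. le x y \<and> le y z \<longrightarrow> le x z)"

definition is_upset :: "'a topology \<Rightarrow> ('a \<Rightarrow> 'a \<Rightarrow> bool) \<Rightarrow> 'a set \<Rightarrow> bool" where
  "is_upset T le U \<longleftrightarrow> U \<subseteq> topspace T \<and>
     (\<forall>x\<in>U. \<forall>y\<in>topspace T. le x y \<longrightarrow> y \<in> U)"

definition downset :: "'a topology \<Rightarrow> ('a \<Rightarrow> 'a \<Rightarrow> bool) \<Rightarrow> 'a set \<Rightarrow> 'a set" where
  "downset T le S = {y \<in> topspace T. \<exists>x\<in>S. le y x}"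

definition ClopUp :: "'a topology \<Rightarrow> ('a \<Rightarrow> 'a \<Rightarrow> bool) \<Rightarrow> 'a set set" where
  "ClopUp T le = {U. clopenin T U \<and> is_upset T le U}"

definition priestley_space :: "'a topology \<Rightarrow> ('a \<Rightarrow> 'a \<Rightarrow> bool) \<Rightarrow> bool" where
  "priestley_space T le \<longleftrightarrow> stone_space T \<and> partial_order_on_carrier T le \<and>
     (\<forall>x\<in>topspace T. \<forall>y\<in>topspace T. \<not> le x y \<longrightarrow>
        (\<exists>U\<in>ClopUp T le. x \<in> U \<and> y \<notin> U))"

definition L_space :: "'a topology \<Rightarrow> ('a \<Rightarrow> 'a \<Rightarrow> bool) \<Rightarrow> bool" where
  "L_space T le \<longleftrightarrow> priestley_space T le \<and>
     (\<forall>C. clopenin T C \<longrightarrow> clopenin T (downset T le C)) \<and>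
     (\<forall>U. openin T U \<and> is_upset T le U \<longrightarrow> openin T (T closure_of U))"

definition pre :: "'a topology \<Rightarrow> ('a \<Rightarrow> 'b) \<Rightarrow> 'b set \<Rightarrow> 'a set" where
  "pre T f U = {x \<in> topspace T. f x \<in> U}"

definition L_morphism ::
  "'a topology \<Rightarrow> ('a \<Rightarrow> 'a \<Rightarrow> bool) \<Rightarrow> 'b topology \<Rightarrow> ('b \<Rightarrow> 'b \<Rightarrow> bool) \<Rightarrow> ('a \<Rightarrow> 'b) \<Rightarrow> bool" where
  "L_morphism T1 le1 T2 le2 f \<longleftrightarrow>
     L_space T1 le1 \<and> L_space T2 le2 \<and> continuous_map T1 T2 f \<and>
     (\<forall>x\<in>topspace T1. \<forall>y\<in>topspace T1. le1 x y \<longrightarrow> le2 (f x) (f y)) \<and>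
     (\<forall>U. openin T2 U \<and> is_upset T2 le2 U \<longrightarrow>
        pre T1 f (T2 closure_of U) = T1 closure_of (pre T1 f U))"

definition spatial_part :: "'a topology \<Rightarrow> ('a \<Rightarrow> 'a \<Rightarrow> bool) \<Rightarrow> 'a set" where
  "spatial_part T le = {y \<in> topspace T. clopenin T (downset T le {y})}"

definition minimals :: "('a \<Rightarrow> 'a \<Rightarrow> bool) \<Rightarrow> 'a set \<Rightarrow> 'a set" where
  "minimals le F = {x \<in> F. \<forall>y\<in>F. le y x \<longrightarrow> y = x}"

definition scott_upset :: "'a topology \<Rightarrow> ('a \<Rightarrow> 'a \<Rightarrow> bool) \<Rightarrow> 'a set \<Rightarrow> bool" where
  "scott_upset T le F \<longleftrightarrow> closedin T F \<and> is_upset T le F \<and>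
     minimals le F \<subseteq> spatial_part T le"

definition ClopSUp :: "'a topology \<Rightarrow> ('a \<Rightarrow> 'a \<Rightarrow> bool) \<Rightarrow> 'a set set" where
  "ClopSUp T le = {F. clopenin T F \<and> scott_upset T le F}"

definition way_below :: "'a topology \<Rightarrow> ('a \<Rightarrow> 'a \<Rightarrow> bool) \<Rightarrow> 'a set \<Rightarrow> 'a set \<Rightarrow> bool" where
  "way_below T le V U \<longleftrightarrow>
     (\<forall>W. openin T W \<and> is_upset T le W \<longrightarrow> U \<subseteq> T closure_of W \<longrightarrow> V \<subseteq> W)"

definition ker :: "'a topology \<Rightarrow> ('a \<Rightarrow> 'a \<Rightarrow> bool) \<Rightarrow> 'a set \<Rightarrow> 'a set" where
  "ker T le U = \<Union>{V \<in> ClopUp T le. way_below T le V U}"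

definition core :: "'a topology \<Rightarrow> ('a \<Rightarrow> 'a \<Rightarrow> bool) \<Rightarrow> 'a set \<Rightarrow> 'a set" where
  "core T le U = \<Union>{V \<in> ClopSUp T le. V \<subseteq> U}"

text \<open>A subset D of U is dense in U iff U is contained in the closure of D.\<close>
definition continuous_L_space :: "'a topology \<Rightarrow> ('a \<Rightarrow> 'a \<Rightarrow> bool) \<Rightarrow> bool" where
  "continuous_L_space T le \<longleftrightarrow> L_space T le \<and>
     (\<forall>U\<in>ClopUp T le. U \<subseteq> T closure_of (ker T le U))"

definition algebraic_L_space :: "'a topology \<Rightarrow> ('a \<Rightarrow> 'a \<Rightarrow> bool) \<Rightarrow> bool" where
  "algebraic_L_space T le \<longleftrightarrow> L_space T le \<and>
     (\<forall>U\<in>ClopUp T le. U \<subseteq> T closure_of (core T le U))"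

definition proper_L_morphism ::
  "'a topology \<Rightarrow> ('a \<Rightarrow> 'a \<Rightarrow> bool) \<Rightarrow> 'b topology \<Rightarrow> ('b \<Rightarrow> 'b \<Rightarrow> bool) \<Rightarrow> ('a \<Rightarrow> 'b) \<Rightarrow> bool" where
  "proper_L_morphism T1 le1 T2 le2 f \<longleftrightarrow> L_morphism T1 le1 T2 le2 f \<and>
     (\<forall>U\<in>ClopUp T2 le2. pre T1 f (ker T2 le2 U) \<subseteq> ker T1 le1 (pre T1 f U))"

definition coherent_L_morphism ::
  "'a topology \<Rightarrow> ('a \<Rightarrow> 'a \<Rightarrow> bool) \<Rightarrow> 'b topology \<Rightarrow> ('b \<Rightarrow> 'b \<Rightarrow> bool) \<Rightarrow> ('a \<Rightarrow> 'b) \<Rightarrow> bool" where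
  "coherent_L_morphism T1 le1 T2 le2 f \<longleftrightarrow> L_morphism T1 le1 T2 le2 f \<and>
     (\<forall>U\<in>ClopUp T2 le2. pre T1 f (core T2 le2 U) \<subseteq> core T1 le1 (pre T1 f U))"

end

theory Submission
  imports Defs
begin

lemma downset_closed:
  assumes P: "priestley_space T le" and c: "c \<in> topspace T"
  shows "closedin T (downset T le {c})"
proof -
  have "openin T (topspace T - downset T le {c})"
  proof (subst openin_subopen, intro ballI)
    fix y assume y: "y \<in> topspace T - downset T le {c}"
    then have "\<not> le y c" by (auto simp: downset_def)
    then obtain U where U: "U \<in> ClopUp T le" "y \<in> U" "c \<notin> U"
      using P y c unfolding priestley_space_def by blast
    have "U \<subseteq> topspace T - downset T le {c}"
      using U c unfolding ClopUp_def is_upset_def downset_def by auto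
    moreover have "openin T U" using U unfolding ClopUp_def clopenin_def by auto
    ultimately show "\<exists>V. openin T V \<and> y \<in> V \<and> V \<subseteq> topspace T - downset T le {c}"
      using U by blast
  qed
  then show ?thesis unfolding closedin_def downset_def by auto
qed

lemma chain_min:
  assumes "finite G" "G \<noteq> {}" "\<forall>a\<in>G. \<forall>b\<in>G. le a b \<or> le b a"
    and "\<forall>a\<in>G. \<forall>b\<in>G. \<forall>c\<in>G. le a b \<and> le b c \<longrightarrow> le a c"
  shows "\<exists>m\<in>G. \<forall>g\<in>G. le m g"
  using assms
proof (induction G rule: finite_ne_induct)
  case (singleton x)
  have "le x x" using singleton by blast
  then show ?case by blast
next
  case (insert x F)
  have tot: "\<forall>a\<in>F. \<forall>b\<in>F. le a b \<or> le b a" using insert.prems(1) by blast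
  have trF: "\<forall>a\<in>F. \<forall>b\<in>F. \<forall>c\<in>F. le a b \<and> le b c \<longrightarrow> le a c" using insert.prems(2) by blast
  obtain m where m: "m \<in> F" "\<forall>g\<in>F. le m g" using insert.IH[OF tot trF] by blast
  show ?case
  proof (cases "le m x")
    case True
    then have "\<forall>g\<in>insert x F. le m g" using m by blast
    then show ?thesis using m(1) by blast
  next
    case False
    then have xm: "le x m" using insert.prems(1) m(1) by blast
    have "le x g" if g: "g \<in> F" for g
    proof -
      have "le x m" "le m g" using xm m g by blast+
      moreover have "x \<in> insert x F" "m \<in> insert x F" "g \<in> insert x F" using m g by blast+
      ultimately show ?thesis using insert.prems(2) by blast
    qed
    moreover have "le x x" using insert.prems(1) by blast
    ultimately show ?thesis by blast
  qed
qed

lemma exists_minimal: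
  assumes P: "priestley_space T le" and F: "closedin T F" and x: "x \<in> F"
  shows "\<exists>y\<in>minimals le F. le y x"
proof -
  have po: "partial_order_on_carrier T le" and st: "stone_space T"
    using P unfolding priestley_space_def by auto
  have cs: "compact_space T" using st unfolding stone_space_def by auto
  have Ftop: "F \<subseteq> topspace T" using F closedin_subset by auto
  define A where "A = {a \<in> F. le a x}"
  define Q where "Q = (\<lambda>a b. le b a)"
  have refl: "\<And>a. a \<in> topspace T \<Longrightarrow> le a a"
   and anti: "\<And>a b. a \<in> topspace T \<Longrightarrow> b \<in> topspace T \<Longrightarrow> le a b \<Longrightarrow> le b a \<Longrightarrow> a = b"
   and tr: "\<And>a b c. a \<in> topspace T \<Longrightarrow> b \<in> topspace T \<Longrightarrow> c \<in> topspace T \<Longrightarrow> le a b \<Longrightarrow> le b c \<Longrightarrow> le a c"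
    using po unfolding partial_order_on_carrier_def by blast+
  have Atop: "A \<subseteq> topspace T" using Ftop A_def by auto
  have pord: "partial_order_on A (relation_of Q A)"
  proof -
    have r: "refl_on A (relation_of Q A)"
      unfolding refl_on_def relation_of_def Q_def using Atop refl by auto
    have t: "trans (relation_of Q A)"
    proof (rule transI)
      fix a b c assume "(a, b) \<in> relation_of Q A" "(b, c) \<in> relation_of Q A"
      then show "(a, c) \<in> relation_of Q A"
        unfolding relation_of_def Q_def using Atop tr[of c b a] by auto
    qed
    have a: "antisym (relation_of Q A)"
    proof (rule antisymI)
      fix a b assume "(a, b) \<in> relation_of Q A" "(b, a) \<in> relation_of Q A"
      then show "a = b"
        unfolding relation_of_def Q_def using Atop anti[of a b] by auto
    qed
    show ?thesis unfolding partial_order_on_def preorder_on_def using r t a by (auto simp: relation_of_def)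
  qed
  have "\<exists>u\<in>A. \<forall>a\<in>C. Q a u" if C: "C \<in> Chains (relation_of Q A)" for C
  proof (cases "C = {}")
    case True
    have "x \<in> A" using x refl Ftop A_def by auto
    then show ?thesis using True by blast
  next
    case False
    have CA: "C \<subseteq> A" using C False unfolding Chains_def relation_of_def by auto
    have Ctot: "\<forall>a\<in>C. \<forall>b\<in>C. le a b \<or> le b a"
      using C unfolding Chains_def relation_of_def Q_def by auto
    have Ctr: "\<forall>a\<in>C. \<forall>b\<in>C. \<forall>c\<in>C. le a b \<and> le b c \<longrightarrow> le a c"
    proof (intro ballI impI)
      fix a b c assume "a \<in> C" "b \<in> C" "c \<in> C" "le a b \<and> le b c"
      moreover then have "a \<in> topspace T" "b \<in> topspace T" "c \<in> topspace T" using CA Atop by auto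
      ultimately show "le a c" using tr[of a b c] by auto
    qed
    define U where "U = (\<lambda>c. F \<inter> downset T le {c}) ` C"
    have "\<Inter>U \<noteq> {}"
    proof (rule compact_space_fip[THEN iffD1, OF cs, rule_format], intro conjI allI impI ballI)
      fix S assume "S \<in> U"
      then obtain c where "c \<in> C" "S = F \<inter> downset T le {c}" using U_def by auto
      then show "closedin T S" using F downset_closed[OF P] CA Atop by (simp add: closedin_Int subset_iff)
    next
      fix G assume G: "finite G \<and> G \<subseteq> U"
      then obtain H where H: "H \<subseteq> C" "finite H" "G = (\<lambda>c. F \<inter> downset T le {c}) ` H"
        unfolding U_def by (meson finite_subset_image)
      show "\<Inter>G \<noteq> {}"
      proof (cases "H = {}")
        case True then show ?thesis using H by auto
      next
        case False
        obtain m where m: "m \<in> H" "\<forall>g\<in>H. le m g"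
        proof -
          have "\<forall>a\<in>H. \<forall>b\<in>H. le a b \<or> le b a" using H(1) Ctot by blast
          moreover have "\<forall>a\<in>H. \<forall>b\<in>H. \<forall>c\<in>H. le a b \<and> le b c \<longrightarrow> le a c"
            using H(1) Ctr by blast
          ultimately show ?thesis using chain_min[of H le] H(2) False that by blast
        qed
        have "m \<in> F" "m \<in> topspace T" using m H CA A_def Atop by auto
        then have "m \<in> \<Inter>G" using m H unfolding downset_def by auto
        then show ?thesis by auto
      qed
    qed
    then obtain u where u: "u \<in> \<Inter>U" by auto
    obtain c0 where c0: "c0 \<in> C" using False by auto
    have uF: "u \<in> F" and ut: "u \<in> topspace T" and ule: "\<forall>c\<in>C. le u c"
      using u c0 unfolding U_def downset_def by (auto split: if_splits)
    have "c0 \<in> topspace T" "le c0 x" using c0 CA Atop A_def by auto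
    moreover have "x \<in> topspace T" using x Ftop by auto
    ultimately have "le u x" using tr[of u c0 x] ut ule c0 by auto
    then have "u \<in> A" using uF A_def by auto
    then show ?thesis using ule Q_def by auto
  qed
  then obtain m where m: "m \<in> A" "\<forall>a\<in>A. Q m a \<longrightarrow> a = m"
    using predicate_Zorn[OF pord] by blast
  have "m \<in> minimals le F"
    unfolding minimals_def
  proof (intro CollectI conjI ballI impI)
    show "m \<in> F" using m A_def by auto
    fix y assume "y \<in> F" "le y m"
    moreover have "y \<in> topspace T" "m \<in> topspace T" "x \<in> topspace T" "le m x"
      using \<open>y \<in> F\<close> m A_def Ftop x by auto
    ultimately have "y \<in> A" using tr[of y m x] A_def by auto
    then show "y = m" using m \<open>le y m\<close> Q_def by auto
  qed
  then show ?thesis using m A_def by auto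
qed

lemma scott_below:
  assumes P: "priestley_space T le" and V: "V \<in> ClopSUp T le"
    and W: "openin T W" "is_upset T le W" and VW: "V \<subseteq> T closure_of W"
  shows "V \<subseteq> W"
proof
  fix x assume x: "x \<in> V"
  have Vc: "closedin T V" and Vu: "is_upset T le V" and Vm: "minimals le V \<subseteq> spatial_part T le"
    using V unfolding ClopSUp_def scott_upset_def by auto
  obtain y where y: "y \<in> minimals le V" "le y x" using exists_minimal[OF P Vc x] by blast
  have yV: "y \<in> V" using y unfolding minimals_def by auto
  have ysp: "y \<in> spatial_part T le" using y Vm by auto
  then have D: "openin T (downset T le {y})" and yt: "y \<in> topspace T"
    unfolding spatial_part_def clopenin_def by auto
  have "le y y" using P yt unfolding priestley_space_def partial_order_on_carrier_def by auto
  then have yD: "y \<in> downset T le {y}" using yt unfolding downset_def by auto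
  have "y \<in> T closure_of W" using VW yV by auto
  then obtain z where z: "z \<in> W" "z \<in> downset T le {y}"
    using D yD unfolding in_closure_of by blast
  then have "y \<in> W" using W(2) yt unfolding is_upset_def downset_def by auto
  moreover have "x \<in> topspace T" using Vc x closedin_subset by auto
  ultimately show "x \<in> W" using W(2) y(2) unfolding is_upset_def by auto
qed

lemma core_sub_ker:
  assumes P: "priestley_space T le"
  shows "core T le U \<subseteq> ker T le U"
proof -
  have "V \<in> ClopUp T le \<and> way_below T le V U" if "V \<in> ClopSUp T le" "V \<subseteq> U" for V
  proof
    show "V \<in> ClopUp T le" using that unfolding ClopSUp_def ClopUp_def scott_upset_def by auto
    show "way_below T le V U" unfolding way_below_def
      using scott_below[OF P that(1)] that(2) by blast
  qed
  then show ?thesis unfolding core_def ker_def by blast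
qed

lemma ker_sub_core:
  assumes A: "algebraic_L_space T le" and U: "U \<in> ClopUp T le"
  shows "ker T le U \<subseteq> core T le U"
proof -
  have o: "openin T (core T le U)"
    unfolding core_def ClopSUp_def clopenin_def by (rule openin_Union) auto
  have u: "is_upset T le (core T le U)"
    unfolding core_def ClopSUp_def scott_upset_def is_upset_def by blast
  have d: "U \<subseteq> T closure_of (core T le U)" using A U unfolding algebraic_L_space_def by auto
  show ?thesis unfolding ker_def
  proof (rule Union_least)
    fix V assume "V \<in> {V \<in> ClopUp T le. way_below T le V U}"
    then show "V \<subseteq> core T le U" using o u d unfolding way_below_def by auto
  qed
qed

lemma ker_eq_core:
  assumes A: "algebraic_L_space T le" and U: "U \<in> ClopUp T le"
  shows "ker T le U = core T le U"
proof -
  have "priestley_space T le" using A unfolding algebraic_L_space_def L_space_def by auto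
  then show ?thesis using core_sub_ker ker_sub_core[OF A U] by blast
qed

lemma pre_ClopUp:
  assumes "L_morphism T1 le1 T2 le2 f" "U \<in> ClopUp T2 le2"
  shows "pre T1 f U \<in> ClopUp T1 le1"
proof -
  have c: "continuous_map T1 T2 f" and m: "\<forall>x\<in>topspace T1. \<forall>y\<in>topspace T1. le1 x y \<longrightarrow> le2 (f x) (f y)"
    using assms(1) unfolding L_morphism_def by auto
  have o: "openin T2 U" "closedin T2 U" "is_upset T2 le2 U" using assms(2) unfolding ClopUp_def clopenin_def by auto
  have "pre T1 f U = {x \<in> topspace T1. f x \<in> U}" unfolding pre_def by simp
  moreover have "openin T1 {x \<in> topspace T1. f x \<in> U}" using openin_continuous_map_preimage[OF c o(1)] .
  moreover have "closedin T1 {x \<in> topspace T1. f x \<in> U}" using closedin_continuous_map_preimage[OF c o(2)] .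
  moreover have "is_upset T1 le1 {x \<in> topspace T1. f x \<in> U}"
    using m o(3) c unfolding is_upset_def continuous_map_def by blast
  ultimately show ?thesis unfolding ClopUp_def clopenin_def by auto
qed

theorem theorem4p8:
  fixes T1 :: "'a topology" and le1 :: "'a \<Rightarrow> 'a \<Rightarrow> bool"
    and T2 :: "'b topology" and le2 :: "'b \<Rightarrow> 'b \<Rightarrow> bool"
    and f :: "'a \<Rightarrow> 'b"
  shows "(algebraic_L_space T1 le1 \<longrightarrow> continuous_L_space T1 le1) \<and>
         (algebraic_L_space T1 le1 \<and> algebraic_L_space T2 le2 \<longrightarrow>
            (coherent_L_morphism T1 le1 T2 le2 f \<longleftrightarrow> proper_L_morphism T1 le1 T2 le2 f))"
proof (intro conjI impI)
  assume A: "algebraic_L_space T1 le1"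
  show "continuous_L_space T1 le1"
    unfolding continuous_L_space_def
  proof (intro conjI ballI)
    show "L_space T1 le1" using A unfolding algebraic_L_space_def by auto
    fix U assume U: "U \<in> ClopUp T1 le1"
    then show "U \<subseteq> T1 closure_of ker T1 le1 U"
      using A ker_eq_core[OF A U] unfolding algebraic_L_space_def by auto
  qed
next
  assume A: "algebraic_L_space T1 le1 \<and> algebraic_L_space T2 le2"
  have "(\<forall>U\<in>ClopUp T2 le2. pre T1 f (core T2 le2 U) \<subseteq> core T1 le1 (pre T1 f U)) \<longleftrightarrow>
        (\<forall>U\<in>ClopUp T2 le2. pre T1 f (ker T2 le2 U) \<subseteq> ker T1 le1 (pre T1 f U))"
    if L: "L_morphism T1 le1 T2 le2 f"
    using ker_eq_core A pre_ClopUp[OF L] by metis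
  then show "coherent_L_morphism T1 le1 T2 le2 f \<longleftrightarrow> proper_L_morphism T1 le1 T2 le2 f"
    unfolding coherent_L_morphism_def proper_L_morphism_def by blast
qed

end
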